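(* For every $\gamma\ge0$, $\bar{\mathcal R}_\gamma=\mathcal R_\gamma$. Equivalently, $\mathcal R_\gamma\times\{\gamma\}$ is exactly the set of triples $(E_1,E_2,E_\Omega)$ with $E_\Omega=\gamma$ that are achievable by fixed-length tests with a rejection option.
   Context: Standing assumptions: $\mathcal X$ is a finite set and $\mathsf P_1,\mathsf P_2$ are two distinct probability mass functions on $\mathcal X$, both with full support. Under hypothesis $H_i$ the observations $X_1,X_2,\dots$ are i.i.d. with law $\mathsf P_i$, and $\mathsf P_i(\cdot)$ denotes probability under $H_i$. $\gamma$-almost-fixed-length region: $(E_1,E_2)\in\mathcal R_\gamma$ if for every $\delta>0$ there exist $l\in\mathbb Z^+$, $C>0$, $n_0$, and for every $n\ge n_0$ a test $(\tau_n,d_n)$ with: - $\tau_n$ a stopping time for the natural filtration of $X_1,X_2,\dots$, and $d_n\in\{1,2\}$ a function of $X_1,\dots,X_{\tau_n}$; - $\tau_n\le Cn^l$; - $\mathsf P_i(\tau_n>n)\le e^{-\gamma n}$ for $i=1,2$; - $\mathsf P_1(d_n=2)\le e^{-(E_1-\delta)n}$; - $\mathsf P_2(d_n=1)\le e^{-(E_2-\delta)n}$. Tests with rejection option: a fixed-length test with rejection option on $n$ samples is a partition of $\mathcal X^n$ into three sets $A_1^n,A_2^n,A_\Omega^n$. On $A_i^n$ it accepts $H_i$; on $A_\Omega^n$ it rejects both hypotheses. Region $\bar{\mathcal R}_\gamma$: for $\gamma\ge0$, $(E_1,E_2)\in\bar{\mathcal R}_\gamma$ if for every $\delta>0$ there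 exist $n_0$ and, for every $n\ge n_0$, such a partition with: - $\mathsf P_1((X_1,\dots,X_n)\in A_2^n)\le e^{-(E_1-\delta)n}$; - $\mathsf P_2((X_1,\dots,X_n)\in A_1^n)\le e^{-(E_2-\delta)n}$; - $\mathsf P_1((X_1,\dots,X_n)\in A_\Omega^n)+\mathsf P_2((X_1,\dots,X_n)\in A_\Omega^n)\le e^{-(\gamma-\delta)n}$. *)

theory Defs
  imports "HOL-Probability.Probability"
begin

text \<open>Probability, under i.i.d. law P, that the first n observations form a word in S
  (S is a set of words of one fixed length n): the product measure of S.\<close>
definition wprob :: "'a pmf \<Rightarrow> 'a list set \<Rightarrow> real" where
  "wprob P S = (\<Sum>w\<in>S. \<Prod>x\<leftarrow>w. pmf P x)"

text \<open>A stopping rule: stop w means "stop after having observed exactly the prefix w". Every stopping time of the natural filtration has this form.\<close>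
definition stime :: "('a list \<Rightarrow> bool) \<Rightarrow> 'a list \<Rightarrow> nat" where
  "stime stp w = (LEAST k. stp (take k w))"

definition seq_test :: "nat \<Rightarrow> ('a list \<Rightarrow> bool) \<Rightarrow> ('a list \<Rightarrow> nat) \<Rightarrow> bool" where
  "seq_test N stp dec \<longleftrightarrow>
     (\<forall>w. length w = N \<longrightarrow> (\<exists>k\<le>N. stp (take k w))) \<and> (\<forall>w. dec w \<in> {1,2})"

definition sdec :: "('a list \<Rightarrow> bool) \<Rightarrow> ('a list \<Rightarrow> nat) \<Rightarrow> 'a list \<Rightarrow> nat" where
  "sdec stp dec w = dec (take (stime stp w) w)"

text \<open>gamma-almost-fixed-length region R_gamma.\<close>
definition R_seq :: "'a pmf \<Rightarrow> 'a pmf \<Rightarrow> real \<Rightarrow> (real \<times> real) set" where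
  "R_seq P1 P2 \<gamma> = {(E1, E2). \<forall>\<delta>>0. \<exists>l::nat. l \<ge> 1 \<and> (\<exists>C::real. C > 0 \<and> (\<exists>n0. \<forall>n\<ge>n0.
      \<exists>N stp dec. real N \<le> C * real n ^ l \<and> seq_test N stp dec \<and>
        wprob P1 {w. length w = N \<and> stime stp w > n} \<le> exp (- \<gamma> * real n) \<and>
        wprob P2 {w. length w = N \<and> stime stp w > n} \<le> exp (- \<gamma> * real n) \<and>
        wprob P1 {w. length w = N \<and> sdec stp dec w = 2} \<le> exp (- (E1 - \<delta>) * real n) \<and>
        wprob P2 {w. length w = N \<and> sdec stp dec w = 1} \<le> exp (- (E2 - \<delta>) * real n)))}"

definition partition3 :: "nat \<Rightarrow> 'a list set \<Rightarrow> 'a list set \<Rightarrow> 'a list set \<Rightarrow> bool" where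
  "partition3 n A1 A2 AO \<longleftrightarrow> A1 \<union> A2 \<union> AO = {w. length w = n} \<and>
     A1 \<inter> A2 = {} \<and> A1 \<inter> AO = {} \<and> A2 \<inter> AO = {}"

text \<open>Region of fixed-length tests with rejection option, \bar R_gamma.\<close>
definition R_rej :: "'a pmf \<Rightarrow> 'a pmf \<Rightarrow> real \<Rightarrow> (real \<times> real) set" where
  "R_rej P1 P2 \<gamma> = {(E1, E2). \<forall>\<delta>>0. \<exists>n0. \<forall>n\<ge>n0. \<exists>A1 A2 AO. partition3 n A1 A2 AO \<and>
      wprob P1 A2 \<le> exp (- (E1 - \<delta>) * real n) \<and>
      wprob P2 A1 \<le> exp (- (E2 - \<delta>) * real n) \<and>
      wprob P1 AO + wprob P2 AO \<le> exp (- (\<gamma> - \<delta>) * real n)}"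

end

theory Submission
  imports Defs "HOL-Real_Asymp.Real_Asymp"
begin
lemma finite_len: "finite {w::'a::finite list. length w = n}"
  using finite_lists_length_eq[of "UNIV::'a set" n] by simp

lemma len_Suc_eq: "{w::'a list. length w = Suc n} = (\<lambda>(x,w). x # w) ` (UNIV \<times> {w. length w = n})"
  by (auto simp: length_Suc_conv image_iff)

lemma sum_prod_len:
  fixes f :: "'a::finite \<Rightarrow> real"
  shows "(\<Sum>w\<in>{w. length w = n}. \<Prod>x\<leftarrow>w. f x) = (\<Sum>x\<in>UNIV. f x) ^ n"
proof (induction n)
  case 0
  then show ?case by simp
next
  case (Suc n)
  have inj: "inj_on (\<lambda>(x,w). x # w) (UNIV \<times> {w::'a list. length w = n})"
    by (auto simp: inj_on_def)
  have "(\<Sum>w\<in>{w. length w = Suc n}. \<Prod>x\<leftarrow>w. f x)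
      = (\<Sum>p\<in>UNIV \<times> {w::'a list. length w = n}. f (fst p) * (\<Prod>x\<leftarrow>snd p. f x))"
    unfolding len_Suc_eq by (subst sum.reindex[OF inj]) (auto intro!: sum.cong)
  also have "\<dots> = (\<Sum>x\<in>UNIV. f x) * (\<Sum>w\<in>{w::'a list. length w = n}. \<Prod>x\<leftarrow>w. f x)"
    by (simp add: sum_product sum.cartesian_product split_def)
  finally show ?case using Suc by simp
qed

lemma wprob_len: "wprob (P::'a::finite pmf) {w. length w = n} = 1"
  unfolding wprob_def sum_prod_len by (simp add: sum_pmf_eq_1)

lemma wprob_nonneg: "wprob P S \<ge> 0"
  unfolding wprob_def by (auto intro!: sum_nonneg prod_list_nonneg)

lemma wprob_mono: "S \<subseteq> T \<Longrightarrow> finite T \<Longrightarrow> wprob P S \<le> wprob P T"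
  unfolding wprob_def by (rule sum_mono2) (auto intro!: prod_list_nonneg)

lemma wprob_le1: "S \<subseteq> {w. length w = n} \<Longrightarrow> wprob (P::'a::finite pmf) S \<le> 1"
  using wprob_mono[of S "{w. length w = n}" P] finite_len wprob_len by metis

lemma wprob_concat:
  assumes "S \<subseteq> {w. length w = n}" "finite S" "finite T"
  shows "wprob P ((\<lambda>(x,y). x @ y) ` (S \<times> T)) = wprob P S * wprob P T"
proof -
  have inj: "inj_on (\<lambda>(x,y). x @ y) (S \<times> T)"
  proof (rule inj_onI, clarify)
    fix x y x' y' assume "x \<in> S" "y \<in> T" "x' \<in> S" "y' \<in> T" "x @ y = x' @ y'"
    then show "x = x' \<and> y = y'" using assms(1) append_eq_append_conv[of x x' y y'] by auto
  qed
  show ?thesis unfolding wprob_def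
    by (subst sum.reindex[OF inj]) (simp add: sum_product sum.cartesian_product split_def)
qed

lemma split_set:
  "{w. length w = n + m \<and> A (take n w) \<and> B (drop n w)}
   = (\<lambda>(x,y). x @ y) ` ({v. length v = n \<and> A v} \<times> {v. length v = m \<and> B v})"
proof (rule set_eqI, rule iffI)
  fix w assume "w \<in> {w. length w = n + m \<and> A (take n w) \<and> B (drop n w)}"
  then show "w \<in> (\<lambda>(x,y). x @ y) ` ({v. length v = n \<and> A v} \<times> {v. length v = m \<and> B v})"
    by (intro image_eqI[of _ _ "(take n w, drop n w)"]) auto
qed auto

lemma wprob_split:
  "wprob (P::'a::finite pmf) {w. length w = n + m \<and> A (take n w) \<and> B (drop n w)}
   = wprob P {v. length v = n \<and> A v} * wprob P {v. length v = m \<and> B v}"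
  unfolding split_set
proof (rule wprob_concat[where n=n])
  show "finite {v. length v = n \<and> A v}"
    by (rule finite_subset[of _ "{w. length w = n}"]) (auto intro: finite_len)
  show "finite {v. length v = m \<and> B v}"
    by (rule finite_subset[of _ "{w. length w = m}"]) (auto intro: finite_len)
qed auto

lemma wprob_marg:
  assumes "n \<le> M"
  shows "wprob (P::'a::finite pmf) {u. length u = M \<and> Q (take n u)} = wprob P {v. length v = n \<and> Q v}"
proof -
  have "{u. length u = M \<and> Q (take n u)} = {u. length u = n + (M - n) \<and> Q (take n u) \<and> True}"
    using assms by auto
  then show ?thesis using wprob_split[of P n "M - n" Q "\<lambda>_. True"] wprob_len[of P "M-n"] by simp
qed

lemma stime_agree:
  assumes ex: "\<exists>k\<le>m. stp (take k u)" and tv: "take m v = take m u"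
  shows "stime stp v = stime stp u \<and> stime stp u \<le> m"
proof -
  have eqk: "take k v = take k u" if "k \<le> m" for k
    using tv that by (metis min.absorb1 take_take)
  obtain k where k: "k \<le> m" "stp (take k u)" using ex by blast
  let ?s = "stime stp u"
  have su: "stp (take ?s u)" unfolding stime_def using k(2) by (rule LeastI)
  have sle: "?s \<le> k" unfolding stime_def using k(2) by (rule Least_le)
  have "stime stp v = ?s"
    unfolding stime_def[of stp v]
  proof (rule Least_equality)
    show "stp (take ?s v)" using su eqk[of ?s] sle k(1) by simp
    fix y assume y: "stp (take y v)"
    show "?s \<le> y"
    proof (cases "y \<le> m")
      case True
      then have "stp (take y u)" using y eqk by simp
      then show ?thesis unfolding stime_def by (rule Least_le)
    next
      case False then show ?thesis using sle k(1) by simp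
    qed
  qed
  then show ?thesis using sle k(1) by simp
qed

lemma sdec_agree:
  assumes ex: "\<exists>k\<le>m. stp (take k u)" and tv: "take m v = take m u"
  shows "sdec stp dec v = sdec stp dec u"
proof -
  from stime_agree[OF assms] have s: "stime stp v = stime stp u" "stime stp u \<le> m" by auto
  have "take (stime stp u) v = take (stime stp u) u"
    using tv s(2) by (metis min.absorb1 take_take)
  then show ?thesis unfolding sdec_def s(1) by simp
qed

lemma seq_to_rej:
  fixes stp :: "'a::finite list \<Rightarrow> bool"
  assumes st: "seq_test N stp dec"
  shows "\<exists>A1 A2 AO. partition3 n A1 A2 AO \<and> (\<forall>P::'a pmf.
     wprob P A2 \<le> wprob P {w. length w = N \<and> sdec stp dec w = 2} \<and>
     wprob P A1 \<le> wprob P {w. length w = N \<and> sdec stp dec w = 1} \<and>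
     wprob P AO = wprob P {w. length w = N \<and> stime stp w > n})"
proof -
  define stopped where "stopped v \<longleftrightarrow> (\<exists>k\<le>n. stp (take k v))" for v :: "'a list"
  define A1 where "A1 = {v. length v = n \<and> stopped v \<and> sdec stp dec v \<noteq> 2}"
  define A2 where "A2 = {v. length v = n \<and> stopped v \<and> sdec stp dec v = 2}"
  define AO where "AO = {v. length v = n \<and> \<not> stopped v}"
  define M where "M = max n N"
  have nM: "n \<le> M" and NM: "N \<le> M" unfolding M_def by auto
  have dec12: "dec w \<in> {1,2}" for w using st unfolding seq_test_def by blast
  have keyN: "stime stp (take N u) = stime stp u \<and> sdec stp dec (take N u) = sdec stp dec u
              \<and> stime stp u \<le> N"
    if "length u = M" for u
  proof -
    have lN: "length (take N u) = N" using that NM by simp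
    have ex: "\<exists>k\<le>N. stp (take k (take N u))"
      using st lN unfolding seq_test_def by blast
    have ex': "\<exists>k\<le>N. stp (take k u)"
      using ex by (metis min.absorb1 take_take)
    have tt: "take N (take N u) = take N u" by simp
    show ?thesis using stime_agree[OF ex' tt] sdec_agree[OF ex' tt]
      by simp
  qed
  have keyn: "stopped (take n u) \<longleftrightarrow> stime stp u \<le> n" if "length u = M" for u
  proof
    assume "stopped (take n u)"
    then have ex': "\<exists>k\<le>n. stp (take k u)" unfolding stopped_def
      by (metis min.absorb1 take_take)
    show "stime stp u \<le> n" using stime_agree[OF ex', of u] by simp
  next
    assume le: "stime stp u \<le> n"
    have lN: "length (take N u) = N" using that NM by simp
    have ex: "\<exists>k\<le>N. stp (take k (take N u))"
      using st lN unfolding seq_test_def by blast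
    then have ex': "\<exists>k. stp (take k u)" by (metis min.absorb1 take_take)
    then have "stp (take (stime stp u) u)" unfolding stime_def by (metis LeastI)
    then show "stopped (take n u)" unfolding stopped_def using le
      by (metis min.absorb1 take_take)
  qed
  have keyd: "sdec stp dec (take n u) = sdec stp dec u" if "length u = M" "stopped (take n u)" for u
  proof -
    have ex': "\<exists>k\<le>n. stp (take k u)" using that(2) unfolding stopped_def
      by (metis min.absorb1 take_take)
    show ?thesis using sdec_agree[OF ex', of "take n u"] by simp
  qed
  have part: "partition3 n A1 A2 AO"
    unfolding partition3_def A1_def A2_def AO_def by auto
  have fM: "finite {u::'a list. length u = M}" by (rule finite_len)
  {
    fix P :: "'a pmf"
    have "wprob P A2 = wprob P {u. length u = M \<and> (take n u) \<in> A2}"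
      using wprob_marg[OF nM, of P "\<lambda>v. v \<in> A2"] unfolding A2_def by simp
    also have "\<dots> \<le> wprob P {u. length u = M \<and> sdec stp dec (take N u) = 2}"
      using keyN keyd by (intro wprob_mono[OF _ finite_subset[OF _ fM]]) (auto simp: A2_def)
    also have "\<dots> = wprob P {w. length w = N \<and> sdec stp dec w = 2}"
      by (rule wprob_marg[OF NM])
    finally have 2: "wprob P A2 \<le> wprob P {w. length w = N \<and> sdec stp dec w = 2}" .
    have "wprob P A1 = wprob P {u. length u = M \<and> (take n u) \<in> A1}"
      using wprob_marg[OF nM, of P "\<lambda>v. v \<in> A1"] unfolding A1_def by simp
    also have "\<dots> \<le> wprob P {u. length u = M \<and> sdec stp dec (take N u) = 1}"
    proof (rule wprob_mono)
      show "finite {u. length u = M \<and> sdec stp dec (take N u) = 1}"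
        by (rule finite_subset[OF _ fM]) auto
      show "{u. length u = M \<and> take n u \<in> A1} \<subseteq> {u. length u = M \<and> sdec stp dec (take N u) = 1}"
      proof (rule subsetI)
        fix u assume "u \<in> {u. length u = M \<and> take n u \<in> A1}"
        then have u: "length u = M" "take n u \<in> A1" by auto
        have "sdec stp dec u \<in> {1,2}" unfolding sdec_def using dec12 by blast
        then show "u \<in> {u. length u = M \<and> sdec stp dec (take N u) = 1}" using u keyN[OF u(1)] keyd[OF u(1)]
          by (auto simp: A1_def)
      qed
    qed
    also have "\<dots> = wprob P {w. length w = N \<and> sdec stp dec w = 1}"
      by (rule wprob_marg[OF NM])
    finally have 1: "wprob P A1 \<le> wprob P {w. length w = N \<and> sdec stp dec w = 1}" .
    have "wprob P AO = wprob P {u. length u = M \<and> (take n u) \<in> AO}"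
      using wprob_marg[OF nM, of P "\<lambda>v. v \<in> AO"] unfolding AO_def by simp
    also have "{u. length u = M \<and> (take n u) \<in> AO} = {u. length u = M \<and> stime stp (take N u) > n}"
      using keyN keyn nM by (auto simp: AO_def)
    also have "wprob P \<dots> = wprob P {w. length w = N \<and> stime stp w > n}"
      by (rule wprob_marg[OF NM])
    finally have O: "wprob P AO = wprob P {w. length w = N \<and> stime stp w > n}" .
    note 1 2 O
  }
  then show ?thesis using part by blast
qed

lemma two_le_exp: "\<delta> > 0 \<Longrightarrow> real n \<ge> ln 2 / \<delta> \<Longrightarrow> 2 \<le> exp (\<delta> * real n)"
proof -
  assume d: "\<delta> > 0" and n: "real n \<ge> ln 2 / \<delta>"
  have "ln 2 \<le> \<delta> * real n" using n d by (simp add: field_simps)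
  then have "exp (ln 2) \<le> exp (\<delta> * real n)" by (metis exp_le_cancel_iff)
  then show ?thesis by simp
qed

lemma seq_sub_rej:
  fixes P1 P2 :: "'a::finite pmf"
  assumes "(E1, E2) \<in> R_seq P1 P2 \<gamma>"
  shows "(E1, E2) \<in> R_rej P1 P2 \<gamma>"
  unfolding R_rej_def
proof (clarify)
  fix \<delta> :: real assume d: "\<delta> > 0"
  from assms d obtain l C n0 where H: "\<forall>n\<ge>n0.
      \<exists>N stp dec. real N \<le> C * real n ^ l \<and> seq_test N stp dec \<and>
        wprob P1 {w. length w = N \<and> stime stp w > n} \<le> exp (- \<gamma> * real n) \<and>
        wprob P2 {w. length w = N \<and> stime stp w > n} \<le> exp (- \<gamma> * real n) \<and>
        wprob P1 {w. length w = N \<and> sdec stp dec w = 2} \<le> exp (- (E1 - \<delta>) * real n) \<and>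
        wprob P2 {w. length w = N \<and> sdec stp dec w = 1} \<le> exp (- (E2 - \<delta>) * real n)"
    unfolding R_seq_def by blast
  show "\<exists>n0. \<forall>n\<ge>n0. \<exists>A1 A2 AO. partition3 n A1 A2 AO \<and>
      wprob P1 A2 \<le> exp (- (E1 - \<delta>) * real n) \<and>
      wprob P2 A1 \<le> exp (- (E2 - \<delta>) * real n) \<and>
      wprob P1 AO + wprob P2 AO \<le> exp (- (\<gamma> - \<delta>) * real n)"
  proof (intro exI[of _ "max n0 (nat \<lceil>ln 2 / \<delta>\<rceil>)"] allI impI)
    fix n assume n: "max n0 (nat \<lceil>ln 2 / \<delta>\<rceil>) \<le> n"
    then obtain N stp dec where T: "seq_test N stp dec"
      "wprob P1 {w. length w = N \<and> stime stp w > n} \<le> exp (- \<gamma> * real n)"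
      "wprob P2 {w. length w = N \<and> stime stp w > n} \<le> exp (- \<gamma> * real n)"
      "wprob P1 {w. length w = N \<and> sdec stp dec w = 2} \<le> exp (- (E1 - \<delta>) * real n)"
      "wprob P2 {w. length w = N \<and> sdec stp dec w = 1} \<le> exp (- (E2 - \<delta>) * real n)"
      using H by force
    from seq_to_rej[OF T(1), of n] obtain A1 A2 AO where A: "partition3 n A1 A2 AO"
      "\<And>P. wprob P A2 \<le> wprob P {w. length w = N \<and> sdec stp dec w = 2}"
      "\<And>P. wprob P A1 \<le> wprob P {w. length w = N \<and> sdec stp dec w = 1}"
      "\<And>P. wprob P AO = wprob P {w. length w = N \<and> stime stp w > n}"
      by blast
    have "real n \<ge> ln 2 / \<delta>" using n by linarith
    then have 2: "2 \<le> exp (\<delta> * real n)" using two_le_exp d by blast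
    have "wprob P1 AO + wprob P2 AO \<le> 2 * exp (- \<gamma> * real n)"
      using A(4)[of P1] A(4)[of P2] T(2,3) by simp
    also have "\<dots> \<le> exp (\<delta> * real n) * exp (- \<gamma> * real n)"
      using 2 by (intro mult_right_mono) auto
    also have "\<dots> = exp (- (\<gamma> - \<delta>) * real n)" by (simp add: mult_exp_exp algebra_simps)
    finally show "\<exists>A1 A2 AO. partition3 n A1 A2 AO \<and>
      wprob P1 A2 \<le> exp (- (E1 - \<delta>) * real n) \<and>
      wprob P2 A1 \<le> exp (- (E2 - \<delta>) * real n) \<and>
      wprob P1 AO + wprob P2 AO \<le> exp (- (\<gamma> - \<delta>) * real n)"
      using A(1) A(2)[of P1] A(3)[of P2] T(4,5) by (meson order_trans)
  qed
qed

definition cls :: "'a list \<Rightarrow> 'a list set" where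
  "cls v = {u. mset u = mset v}"

lemma cls_len: "cls v \<subseteq> {u. length u = length v}"
  unfolding cls_def by (auto dest: mset_eq_length)

lemma cls_finite: "finite (cls (v::'a::finite list))"
  using finite_subset[OF cls_len finite_len] .

lemma cls_self: "v \<in> cls v" unfolding cls_def by simp

lemma prod_mset_eq:
  fixes f :: "'a \<Rightarrow> real"
  assumes "mset u = mset v"
  shows "(\<Prod>x\<leftarrow>u. f x) = (\<Prod>x\<leftarrow>v. f x)"
proof -
  have "(\<Prod>x\<leftarrow>u. f x) = prod_mset (mset (map f u))" by (metis prod_mset_prod_list)
  also have "\<dots> = prod_mset (mset (map f v))" using assms by simp
  also have "\<dots> = (\<Prod>x\<leftarrow>v. f x)" by (metis prod_mset_prod_list)
  finally show ?thesis .
qed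

lemma wprob_cls_inter: "wprob P (cls v \<inter> X) = real (card (cls v \<inter> X)) * (\<Prod>x\<leftarrow>v. pmf P x)"
proof -
  have "wprob P (cls v \<inter> X) = (\<Sum>u\<in>cls v \<inter> X. \<Prod>x\<leftarrow>v. pmf P x)"
    unfolding wprob_def by (rule sum.cong) (auto simp: cls_def intro: prod_mset_eq)
  then show ?thesis by simp
qed

lemma wprob_cls: "wprob P (cls v) = real (card (cls v)) * (\<Prod>x\<leftarrow>v. pmf P x)"
  using wprob_cls_inter[of P v UNIV] by simp

lemma cls_append: "wprob (P::'a::finite pmf) (cls a) * wprob P (cls b) \<le> wprob P (cls (a @ b))"
proof -
  have "wprob P (cls a) * wprob P (cls b) = wprob P ((\<lambda>(x,y). x @ y) ` (cls a \<times> cls b))"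
    by (rule wprob_concat[OF cls_len cls_finite cls_finite, symmetric])
  also have "\<dots> \<le> wprob P (cls (a @ b))"
    by (rule wprob_mono[OF _ cls_finite]) (auto simp: cls_def)
  finally show ?thesis .
qed

lemma cls_rep: "wprob (P::'a::finite pmf) (cls v) ^ q * wprob P (cls z) \<le> wprob P (cls (concat (replicate q v) @ z))"
proof (induction q)
  case 0 then show ?case by simp
next
  case (Suc q)
  have "wprob P (cls v) ^ Suc q * wprob P (cls z) = wprob P (cls v) * (wprob P (cls v) ^ q * wprob P (cls z))"
    by simp
  also have "\<dots> \<le> wprob P (cls v) * wprob P (cls (concat (replicate q v) @ z))"
    using Suc wprob_nonneg by (intro mult_left_mono) auto
  also have "\<dots> \<le> wprob P (cls (v @ (concat (replicate q v) @ z)))" by (rule cls_append)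
  finally show ?case by simp
qed

lemma card_classes: "card (cls ` {v::'a::finite list. length v = n}) \<le> (n + 1) ^ CARD('a)"
proof -
  have eq: "cls ` {v::'a list. length v = n} = (\<lambda>M. {u. mset u = M}) ` (mset ` {v. length v = n})"
    unfolding cls_def by auto
  have "card (cls ` {v::'a list. length v = n}) \<le> card (mset ` {v::'a list. length v = n})"
    unfolding eq by (metis card_image_le finite_imageI finite_len)
  also have "\<dots> \<le> card (count ` (mset ` {v::'a list. length v = n}))"
    by (simp add: card_image inj_on_def count_inject)
  also have "\<dots> \<le> card (PiE UNIV (\<lambda>_::'a. {0..n}))"
  proof (rule card_mono)
    show "finite (PiE UNIV (\<lambda>_::'a. {0..n}))" by (intro finite_PiE) auto
    show "count ` mset ` {v::'a list. length v = n} \<subseteq> PiE UNIV (\<lambda>_. {0..n})"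
    proof (rule subsetI)
      fix g assume "g \<in> count ` mset ` {v::'a list. length v = n}"
      then obtain v :: "'a list" where "length v = n" "g = count (mset v)" by auto
      moreover from this have "count (mset v) x \<le> n" for x using count_le_size[of "mset v" x] by simp
      ultimately show "g \<in> PiE UNIV (\<lambda>_. {0..n})" by (simp add: PiE_UNIV_domain)
    qed
  qed
  also have "\<dots> = (n + 1) ^ CARD('a)" by (simp add: card_PiE)
  finally show ?thesis .
qed

lemma group_bound:
  assumes "A \<subseteq> {v::'a::finite list. length v = n}"
  shows "wprob P A \<le> (\<Sum>c\<in>cls ` A. wprob P c)"
proof -
  have fA: "finite A" using finite_subset[OF assms finite_len] .
  have "wprob P A = (\<Sum>c\<in>cls ` A. \<Sum>x\<in>{x\<in>A. cls x = c}. \<Prod>y\<leftarrow>x. pmf P y)"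
    unfolding wprob_def by (rule sum.group[symmetric]) (use fA in auto)
  also have "\<dots> \<le> (\<Sum>c\<in>cls ` A. wprob P c)"
  proof (rule sum_mono)
    fix c assume "c \<in> cls ` A"
    then obtain v where c: "c = cls v" by blast
    have "{x\<in>A. cls x = c} \<subseteq> c" using cls_self by auto
    then show "(\<Sum>x\<in>{x\<in>A. cls x = c}. \<Prod>y\<leftarrow>x. pmf P y) \<le> wprob P c"
      using wprob_mono[of _ c P] cls_finite c unfolding wprob_def by blast
  qed
  finally show ?thesis .
qed

lemma class_sum_bound:
  assumes "A \<subseteq> {v::'a::finite list. length v = n}"
    and "\<And>v. v \<in> A \<Longrightarrow> wprob P (cls v) \<le> t" and t: "t \<ge> 0"
  shows "wprob P A \<le> real ((n + 1) ^ CARD('a)) * t"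
proof -
  have "wprob P A \<le> (\<Sum>c\<in>cls ` A. wprob P c)" by (rule group_bound[OF assms(1)])
  also have "\<dots> \<le> real (card (cls ` A)) * t"
    by (rule sum_bounded_above) (use assms(2) in auto)
  also have "\<dots> \<le> real ((n + 1) ^ CARD('a)) * t"
  proof (cases "A = {}")
    case False
    have "card (cls ` A) \<le> card (cls ` {v::'a list. length v = n})"
      using assms(1) by (intro card_mono finite_imageI finite_len image_mono)
    also have "\<dots> \<le> (n + 1) ^ CARD('a)" by (rule card_classes)
    finally have "real (card (cls ` A)) \<le> real ((n + 1) ^ CARD('a))" by (rule of_nat_mono)
    then show ?thesis using t by (rule mult_right_mono)
  qed (use t in simp)
  finally show ?thesis .
qed

lemma heavy_class:
  "\<exists>z::'a::finite list. length z = n \<and> wprob P (cls z) \<ge> 1 / real ((n + 1) ^ CARD('a))"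
proof (rule ccontr)
  assume "\<not> ?thesis"
  then have lt: "wprob P (cls z) < 1 / real ((n + 1) ^ CARD('a))" if "length z = n" for z :: "'a list"
    using that by force
  have "1 = wprob P {v::'a list. length v = n}" by (simp add: wprob_len)
  also have "\<dots> \<le> (\<Sum>c\<in>cls ` {v::'a list. length v = n}. wprob P c)" by (rule group_bound[where n=n]) auto
  also have "\<dots> < real (card (cls ` {v::'a list. length v = n})) * (1 / real ((n + 1) ^ CARD('a)))"
  proof (rule sum_bounded_above_strict)
    show "0 < card (cls ` {v::'a list. length v = n})"
      using finite_len[of n] by (auto simp: card_gt_0_iff intro!: exI[of _ "replicate n undefined"])
  qed (use lt in auto)
  also have "\<dots> \<le> 1"
  proof -
    have "real (card (cls ` {v::'a list. length v = n})) \<le> real ((n + 1) ^ CARD('a))"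
      using card_classes[where 'a='a, of n] by (simp only: of_nat_le_iff)
    then show ?thesis by (simp add: divide_simps)
  qed
  finally show False by simp
qed

lemma prod_ge_pow:
  fixes f :: "'a \<Rightarrow> real"
  assumes "\<And>x. f x \<ge> m" "m \<ge> 0"
  shows "(\<Prod>x\<leftarrow>w. f x) \<ge> m ^ length w"
proof (induction w)
  case (Cons a w)
  have "m * m ^ length w \<le> f a * (\<Prod>x\<leftarrow>w. f x)"
    using Cons assms by (intro mult_mono) (auto intro: order_trans)
  then show ?case by simp
qed simp

lemma cls_ge_pow:
  assumes "\<And>x. pmf P x \<ge> m" "m \<ge> 0"
  shows "wprob (P::'a::finite pmf) (cls z) \<ge> m ^ length z"
proof -
  have "m ^ length z \<le> (\<Prod>x\<leftarrow>z. pmf P x)" by (rule prod_ge_pow[OF assms])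
  also have "\<dots> = wprob P {z}" by (simp add: wprob_def)
  also have "\<dots> \<le> wprob P (cls z)" by (rule wprob_mono[OF _ cls_finite]) (simp add: cls_self)
  finally show ?thesis .
qed

lemma majority:
  fixes P Q :: "'a::finite pmf"
  assumes "partition3 n A1 A2 AO" "length w = n"
  shows "(wprob P (cls w) \<le> 3 * wprob P A1 \<and> wprob Q (cls w) \<le> 3 * wprob Q A1) \<or>
         (wprob P (cls w) \<le> 3 * wprob P A2 \<and> wprob Q (cls w) \<le> 3 * wprob Q A2) \<or>
         (wprob P (cls w) \<le> 3 * wprob P AO \<and> wprob Q (cls w) \<le> 3 * wprob Q AO)"
proof -
  let ?C = "cls w"
  have sub: "?C \<subseteq> A1 \<union> A2 \<union> AO" using assms cls_len[of w] unfolding partition3_def by auto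
  have fA: "finite A1" "finite A2" "finite AO"
    using assms(1) unfolding partition3_def
    by (metis finite_len finite_Un)+
  have "card ?C \<le> card ((?C \<inter> A1) \<union> (?C \<inter> A2) \<union> (?C \<inter> AO))"
    using sub fA by (intro card_mono) auto
  also have "\<dots> \<le> card (?C \<inter> A1) + card (?C \<inter> A2) + card (?C \<inter> AO)"
    by (metis card_Un_le add_le_mono1 order_trans)
  finally have cs: "card ?C \<le> card (?C \<inter> A1) + card (?C \<inter> A2) + card (?C \<inter> AO)" .
  have gen: "wprob R ?C \<le> 3 * wprob R X"
    if "card ?C \<le> 3 * card (?C \<inter> X)" "finite X" for R :: "'a pmf" and X
  proof -
    have p: "(\<Prod>x\<leftarrow>w. pmf R x) \<ge> 0" by (intro prod_list_nonneg) auto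
    have "wprob R ?C = real (card ?C) * (\<Prod>x\<leftarrow>w. pmf R x)" by (rule wprob_cls)
    also have "\<dots> \<le> 3 * (real (card (?C \<inter> X)) * (\<Prod>x\<leftarrow>w. pmf R x))"
      using that(1) p by (simp add: mult.assoc[symmetric] mult_right_mono)
    also have "real (card (?C \<inter> X)) * (\<Prod>x\<leftarrow>w. pmf R x) = wprob R (?C \<inter> X)"
      by (rule wprob_cls_inter[symmetric])
    also have "\<dots> \<le> wprob R X" by (rule wprob_mono[OF _ that(2)]) auto
    finally show ?thesis by simp
  qed
  have "card ?C \<le> 3 * card (?C \<inter> A1) \<or> card ?C \<le> 3 * card (?C \<inter> A2) \<or> card ?C \<le> 3 * card (?C \<inter> AO)"
    using cs by linarith
  then show ?thesis using gen fA by blast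
qed

lemma exp_contra:
  fixes a b x K \<eta> :: real
  assumes "exp (-a * x) \<le> K * exp (-b * x)" "b - a \<ge> \<eta>" "x \<ge> 0" "K < exp (\<eta> * x)"
  shows False
proof -
  have "K * exp (-b * x) < exp (\<eta> * x) * exp (-b * x)" using assms(4) exp_gt_zero by (rule mult_strict_right_mono)
  also have "\<dots> = exp ((\<eta> - b) * x)" by (simp add: mult_exp_exp algebra_simps)
  also have "\<dots> \<le> exp (-a * x)"
  proof -
    have "(\<eta> - b) * x \<le> -a * x" using assms(2,3) by (intro mult_right_mono) auto
    then show ?thesis by simp
  qed
  finally show False using assms(1) by simp
qed

lemma div_bound:
  fixes u pz D B :: real
  assumes "u * pz \<le> B" "pz \<ge> 1 / D" "D > 0" "u \<ge> 0"
  shows "u \<le> D * B"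
proof -
  have "u = u * (1 / D) * D" using assms(3) by simp
  also have "\<dots> \<le> u * pz * D" using assms by (intro mult_right_mono mult_left_mono) auto
  also have "\<dots> \<le> B * D" using assms by (intro mult_right_mono) auto
  finally show ?thesis by (simp add: mult.commute)
qed

lemma pos_exponent:
  fixes P :: "'a::finite pmf"
  assumes "exp (-(E - d) * real n) < wprob P S" "S \<subseteq> {w. length w = n}" "n > 0"
  shows "E > d"
proof -
  have "wprob P S \<le> 1" by (rule wprob_le1[OF assms(2)])
  then have "exp (-(E - d) * real n) < 1" using assms(1) by linarith
  then have "-(E - d) * real n < 0" by (simp only: exp_less_one_iff)
  then show ?thesis using assms(3) by (simp add: mult_less_0_iff)
qed

lemma poly_exp_eventually:
  assumes "\<eta> > 0"
  shows "\<exists>N. \<forall>n\<ge>N. 3 * (real n + 1) ^ d < exp (\<eta> * real n)"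
proof -
  have "eventually (\<lambda>n::nat. 3 * (real n + 1) ^ d < exp (\<eta> * real n)) at_top"
    using assms by real_asymp
  then show ?thesis by (simp add: eventually_at_top_linorder)
qed

lemma key:
  fixes P Q :: "'a::finite pmf"
  assumes rej: "(E1, E2) \<in> R_rej P Q \<gamma>" and g: "\<gamma> > 0" and d4: "\<delta>4 > 0"
    and mQ: "\<And>x. pmf Q x \<ge> mQ" "mQ > 0"
  shows "\<exists>\<epsilon>>0. \<exists>N0. \<forall>n\<ge>N0. \<forall>v. length v = n \<longrightarrow>
     wprob P (cls v) > exp (-(E1 - \<delta>4) * real n) \<longrightarrow>
     wprob Q (cls v) > exp (-(E2 - \<delta>4) * real n) \<longrightarrow>
     wprob P (cls v) \<le> exp (-(\<gamma> + \<epsilon>) * real n)"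
proof -
  define cQ where "cQ = - ln mQ"
  have mQ1: "mQ \<le> 1" using mQ(1)[of undefined] pmf_le_1[of Q undefined] by linarith
  have cQ0: "cQ \<ge> 0" unfolding cQ_def using mQ1 mQ(2) by simp
  have mQpow: "mQ ^ n = exp (- cQ * real n)" for n
  proof -
    have "mQ ^ n = exp (ln mQ) ^ n" using mQ(2) by simp
    also have "\<dots> = exp (real n * ln mQ)" by (rule exp_of_nat_mult[symmetric])
    finally show ?thesis unfolding cQ_def by (simp add: mult.commute)
  qed
  define q :: nat where "q = nat \<lceil>(cQ + \<delta>4) / \<delta>4\<rceil> + 1"
  have q1: "q \<ge> 1" unfolding q_def by simp
  have "real q \<ge> (cQ + \<delta>4) / \<delta>4" unfolding q_def by linarith
  then have qd: "real q * \<delta>4 \<ge> cQ + \<delta>4" using d4 by (simp add: field_simps)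
  define L :: nat where "L = q + 1"
  define \<epsilon> where "\<epsilon> = \<gamma> / (4 * real q)"
  define \<delta>' where "\<delta>' = min \<delta>4 (\<gamma> / 4) / real L"
  define \<eta> where "\<eta> = min \<delta>4 (\<gamma> / 2)"
  have \<epsilon>0: "\<epsilon> > 0" unfolding \<epsilon>_def using g q1 by simp
  have L0: "real L > 0" unfolding L_def by simp
  have \<delta>'0: "\<delta>' > 0" unfolding \<delta>'_def using g d4 L0 by simp
  have L\<delta>': "real L * \<delta>' = min \<delta>4 (\<gamma> / 4)" unfolding \<delta>'_def using L0 by simp
  have q\<epsilon>: "real q * \<epsilon> = \<gamma> / 4" unfolding \<epsilon>_def using q1 by simp
  have \<eta>0: "\<eta> > 0" unfolding \<eta>_def using g d4 by simp
  obtain n0' where T: "\<forall>n\<ge>n0'. \<exists>A1 A2 AO. partition3 n A1 A2 AO \<and>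
      wprob P A2 \<le> exp (- (E1 - \<delta>') * real n) \<and>
      wprob Q A1 \<le> exp (- (E2 - \<delta>') * real n) \<and>
      wprob P AO + wprob Q AO \<le> exp (- (\<gamma> - \<delta>') * real n)"
    using rej \<delta>'0 unfolding R_rej_def by blast
  obtain N1 where N1: "\<forall>n\<ge>N1. 3 * (real n + 1) ^ CARD('a) < exp (\<eta> * real n)"
    using poly_exp_eventually[OF \<eta>0] by blast
  show ?thesis
  proof (intro exI[of _ \<epsilon>] conjI \<epsilon>0 exI[of _ "max (max n0' N1) 1"] allI impI)
    fix n v assume n: "max (max n0' N1) 1 \<le> n" and lv: "length v = n"
      and h1: "wprob P (cls v) > exp (-(E1 - \<delta>4) * real n)"
      and h2: "wprob Q (cls v) > exp (-(E2 - \<delta>4) * real n)"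
    have n1: "n > 0" using n by simp
    have E1: "E1 > \<delta>4" using pos_exponent[OF h1 _ n1] cls_len[of v] lv by simp
    have E2: "E2 > \<delta>4" using pos_exponent[OF h2 _ n1] cls_len[of v] lv by simp
    define x where "x = real n"
    have x0: "x \<ge> 0" unfolding x_def by simp
    define D where "D = (real n + 1) ^ CARD('a)"
    have D0: "D > 0" unfolding D_def by simp
    have D1: "D \<ge> 1" unfolding D_def by simp
    have KD: "3 * D < exp (\<eta> * x)" using N1 n unfolding D_def x_def by simp
    obtain z :: "'a list" where z: "length z = n" "wprob P (cls z) \<ge> 1 / real ((n + 1) ^ CARD('a))"
      using heavy_class by blast
    have pz: "wprob P (cls z) \<ge> 1 / D" using z(2) unfolding D_def by (simp add: add.commute)
    have qz: "wprob Q (cls z) \<ge> exp (- cQ * x)"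
      using cls_ge_pow[OF mQ(1) less_imp_le[OF mQ(2)], of z] z(1) mQpow unfolding x_def by simp
    define w where "w = concat (replicate q v) @ z"
    have lw: "length w = L * n" unfolding w_def L_def using lv z(1) by (simp add: length_concat sum_list_replicate)
    have "L * n \<ge> n0'" using n L0 by (metis dual_order.trans le_add2 max.bounded_iff mult_le_mono1 mult_1 L_def add.commute)
    then obtain A1 A2 AO where A: "partition3 (L * n) A1 A2 AO"
      "wprob P A2 \<le> exp (- (E1 - \<delta>') * real (L * n))"
      "wprob Q A1 \<le> exp (- (E2 - \<delta>') * real (L * n))"
      "wprob P AO + wprob Q AO \<le> exp (- (\<gamma> - \<delta>') * real (L * n))"
      using T by blast
    have Lx: "real (L * n) = real L * x" unfolding x_def by simp
    have Lexp: "exp (- c * real (L * n)) = exp (- (real L * c) * x)" for c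
      unfolding x_def by (simp add: algebra_simps)
    have LP: "wprob P (cls v) ^ q * wprob P (cls z) \<le> wprob P (cls w)"
      unfolding w_def by (rule cls_rep)
    have LQ: "wprob Q (cls v) ^ q * wprob Q (cls z) \<le> wprob Q (cls w)"
      unfolding w_def by (rule cls_rep)
    have powexp: "exp (- (real q * c) * x) \<le> u ^ q" if "exp (- c * x) < u" for c u
    proof -
      have "exp (- (real q * c) * x) = exp (- c * x) ^ q"
        by (simp add: exp_of_nat_mult[symmetric] algebra_simps)
      also have "\<dots> \<le> u ^ q" using that by (intro power_mono) auto
      finally show ?thesis .
    qed
    have pv0: "wprob P (cls v) ^ q \<ge> 0" using wprob_nonneg by (rule zero_le_power)
    show "wprob P (cls v) \<le> exp (-(\<gamma> + \<epsilon>) * real n)"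
    proof (rule ccontr)
      assume h3: "\<not> ?thesis"
      have h3': "exp (-(\<gamma> + \<epsilon>) * x) < wprob P (cls v)" using h3 unfolding x_def by simp
      from majority[OF A(1) lw, of P Q]
      show False
      proof (elim disjE conjE)
        assume "wprob Q (cls w) \<le> 3 * wprob Q A1"
        then have M1: "wprob Q (cls v) ^ q * wprob Q (cls z) \<le> 3 * exp (- (E2 - \<delta>') * real (L * n))"
          using LQ A(3) by linarith
        have M2: "exp (- (real q * (E2 - \<delta>4)) * x) * exp (- cQ * x) \<le> wprob Q (cls v) ^ q * wprob Q (cls z)"
          using powexp[of "E2 - \<delta>4" "wprob Q (cls v)"] h2 qz unfolding x_def
          by (intro mult_mono) (auto simp: x_def intro: zero_le_power wprob_nonneg)
        have "exp (- (real q * (E2 - \<delta>4) + cQ) * x) \<le> (3 * D) * exp (- (real L * (E2 - \<delta>')) * x)"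
        proof -
          have e1: "exp (- (real q * (E2 - \<delta>4) + cQ) * x) = exp (- (real q * (E2 - \<delta>4)) * x) * exp (- cQ * x)"
            by (simp add: mult_exp_exp algebra_simps)
          have e2: "exp (- (E2 - \<delta>') * real (L * n)) = exp (- (real L * (E2 - \<delta>')) * x)"
            by (rule Lexp)
          have e3: "3 * exp (- (real L * (E2 - \<delta>')) * x) \<le> (3 * D) * exp (- (real L * (E2 - \<delta>')) * x)"
            using D1 by (intro mult_right_mono) auto
          show ?thesis using M1 M2 e1 e2 e3 by linarith
        qed
        moreover have "real L * (E2 - \<delta>') - (real q * (E2 - \<delta>4) + cQ) \<ge> \<eta>"
        proof -
          have "real L * (E2 - \<delta>') - (real q * (E2 - \<delta>4) + cQ) = E2 - real L * \<delta>' + real q * \<delta>4 - cQ"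
            unfolding L_def by (simp add: algebra_simps)
          then show ?thesis using L\<delta>' qd E2 unfolding \<eta>_def by linarith
        qed
        ultimately show False using exp_contra x0 KD by blast
      next
        assume "wprob P (cls w) \<le> 3 * wprob P A2"
        then have "wprob P (cls v) ^ q * wprob P (cls z) \<le> 3 * exp (- (E1 - \<delta>') * real (L * n))"
          using LP A(2) by linarith
        then have "wprob P (cls v) ^ q \<le> D * (3 * exp (- (E1 - \<delta>') * real (L * n)))"
          using div_bound pz D0 pv0 by blast
        moreover have "exp (- (real q * (E1 - \<delta>4)) * x) \<le> wprob P (cls v) ^ q"
          using powexp[of "E1 - \<delta>4" "wprob P (cls v)"] h1 unfolding x_def by simp
        ultimately have "exp (- (real q * (E1 - \<delta>4)) * x) \<le> (3 * D) * exp (- (real L * (E1 - \<delta>')) * x)"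
          using Lexp[of "E1 - \<delta>'"] by (simp only: mult.assoc mult.commute[of D])
        moreover have "real L * (E1 - \<delta>') - real q * (E1 - \<delta>4) \<ge> \<eta>"
        proof -
          have "real L * (E1 - \<delta>') - real q * (E1 - \<delta>4) = E1 - real L * \<delta>' + real q * \<delta>4"
            unfolding L_def by (simp add: algebra_simps)
          moreover have "real q * \<delta>4 \<ge> \<delta>4" using q1 d4 by simp
          ultimately show ?thesis using L\<delta>' E1 d4 unfolding \<eta>_def by linarith
        qed
        ultimately show False using exp_contra x0 KD by blast
      next
        assume "wprob P (cls w) \<le> 3 * wprob P AO"
        moreover have "wprob Q AO \<ge> 0" by (rule wprob_nonneg)
        ultimately have "wprob P (cls v) ^ q * wprob P (cls z) \<le> 3 * exp (- (\<gamma> - \<delta>') * real (L * n))"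
          using LP A(4) by linarith
        then have "wprob P (cls v) ^ q \<le> D * (3 * exp (- (\<gamma> - \<delta>') * real (L * n)))"
          using div_bound pz D0 pv0 by blast
        moreover have "exp (- (real q * (\<gamma> + \<epsilon>)) * x) \<le> wprob P (cls v) ^ q"
          using powexp[of "\<gamma> + \<epsilon>" "wprob P (cls v)"] h3' by simp
        ultimately have "exp (- (real q * (\<gamma> + \<epsilon>)) * x) \<le> (3 * D) * exp (- (real L * (\<gamma> - \<delta>')) * x)"
          using Lexp[of "\<gamma> - \<delta>'"] by (simp only: mult.assoc mult.commute[of D])
        moreover have "real L * (\<gamma> - \<delta>') - real q * (\<gamma> + \<epsilon>) \<ge> \<eta>"
        proof -
          have "real L * (\<gamma> - \<delta>') - real q * (\<gamma> + \<epsilon>) = \<gamma> - real L * \<delta>' - real q * \<epsilon>"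
            unfolding L_def by (simp add: algebra_simps)
          then show ?thesis using L\<delta>' q\<epsilon> g unfolding \<eta>_def by linarith
        qed
        ultimately show False using exp_contra x0 KD by blast
      qed
    qed
  qed
qed

lemma rej_swap:
  assumes "(E1, E2) \<in> R_rej P1 P2 \<gamma>"
  shows "(E2, E1) \<in> R_rej P2 P1 \<gamma>"
  unfolding R_rej_def
proof clarify
  fix \<delta> :: real assume "\<delta> > 0"
  then obtain n0 where H: "\<forall>n\<ge>n0. \<exists>A1 A2 AO. partition3 n A1 A2 AO \<and>
      wprob P1 A2 \<le> exp (- (E1 - \<delta>) * real n) \<and>
      wprob P2 A1 \<le> exp (- (E2 - \<delta>) * real n) \<and>
      wprob P1 AO + wprob P2 AO \<le> exp (- (\<gamma> - \<delta>) * real n)"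
    using assms unfolding R_rej_def by blast
  show "\<exists>n0. \<forall>n\<ge>n0. \<exists>A1 A2 AO. partition3 n A1 A2 AO \<and>
      wprob P2 A2 \<le> exp (- (E2 - \<delta>) * real n) \<and>
      wprob P1 A1 \<le> exp (- (E1 - \<delta>) * real n) \<and>
      wprob P2 AO + wprob P1 AO \<le> exp (- (\<gamma> - \<delta>) * real n)"
  proof (intro exI[of _ n0] allI impI)
    fix n assume "n0 \<le> n"
    then obtain A1 A2 AO where A: "partition3 n A1 A2 AO"
      "wprob P1 A2 \<le> exp (- (E1 - \<delta>) * real n)"
      "wprob P2 A1 \<le> exp (- (E2 - \<delta>) * real n)"
      "wprob P1 AO + wprob P2 AO \<le> exp (- (\<gamma> - \<delta>) * real n)" using H by blast
    have "partition3 n A2 A1 AO" using A(1) unfolding partition3_def by blast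
    then show "\<exists>A1 A2 AO. partition3 n A1 A2 AO \<and>
      wprob P2 A2 \<le> exp (- (E2 - \<delta>) * real n) \<and>
      wprob P1 A1 \<le> exp (- (E1 - \<delta>) * real n) \<and>
      wprob P2 AO + wprob P1 AO \<le> exp (- (\<gamma> - \<delta>) * real n)"
      using A by (intro exI[of _ A2] exI[of _ A1] exI[of _ AO]) auto
  qed
qed

lemma min_pmf:
  assumes "set_pmf (P::'a::finite pmf) = UNIV"
  shows "\<exists>m>0. \<forall>x. pmf P x \<ge> m"
proof -
  have pos: "pmf P x > 0" for x using assms by (metis UNIV_I pmf_positive)
  show ?thesis
    by (intro exI[of _ "Min (range (pmf P))"] conjI allI)
       (use pos in \<open>auto simp: Min_gr_iff\<close>)
qed

lemma poly_exp_le: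
  assumes "\<eta> > 0"
  shows "\<exists>N. \<forall>n\<ge>N. real ((n + 1) ^ d) \<le> exp (\<eta> * real n)"
proof -
  obtain N where "\<forall>n\<ge>N. 3 * (real n + 1) ^ d < exp (\<eta> * real n)"
    using poly_exp_eventually[OF assms] by blast
  then show ?thesis
    by (intro exI[of _ N] allI impI) (smt (verit) of_nat_1 of_nat_add of_nat_power zero_le_power of_nat_0_le_iff)
qed

lemma poly_mult_exp:
  assumes "real ((n + 1) ^ d) \<le> exp (\<eta> * real n)" "w \<le> real ((n + 1) ^ d) * exp (- a * real n)"
  shows "w \<le> exp (- (a - \<eta>) * real n)"
proof -
  have "real ((n + 1) ^ d) * exp (- a * real n) \<le> exp (\<eta> * real n) * exp (- a * real n)"
    using assms(1) by (intro mult_right_mono) auto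
  also have "\<dots> = exp (- (a - \<eta>) * real n)" by (simp add: mult_exp_exp algebra_simps)
  finally show ?thesis using assms(2) by linarith
qed

lemma rej_strong:
  fixes P1 P2 :: "'a::finite pmf"
  assumes rej: "(E1, E2) \<in> R_rej P1 P2 \<gamma>" and g: "\<gamma> \<ge> 0"
    and s1: "set_pmf P1 = UNIV" and s2: "set_pmf P2 = UNIV" and d: "\<delta> > 0"
  shows "\<exists>n0. \<forall>n\<ge>n0. \<exists>A1 A2 AO. partition3 n A1 A2 AO \<and>
     wprob P1 A2 \<le> exp (- (E1 - \<delta>) * real n) \<and>
     wprob P2 A1 \<le> exp (- (E2 - \<delta>) * real n) \<and>
     wprob P1 AO \<le> exp (- \<gamma> * real n) \<and> wprob P2 AO \<le> exp (- \<gamma> * real n)"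
proof -
  define \<delta>2 where "\<delta>2 = \<delta> / 2"
  have d2: "\<delta>2 > 0" unfolding \<delta>2_def using d by simp
  obtain m1 where m1: "m1 > 0" "\<And>x. pmf P1 x \<ge> m1" using min_pmf[OF s1] by blast
  obtain m2 where m2: "m2 > 0" "\<And>x. pmf P2 x \<ge> m2" using min_pmf[OF s2] by blast
  have cls_rej: "\<exists>\<epsilon>. \<epsilon> \<ge> 0 \<and> (\<epsilon> = 0 \<longrightarrow> \<gamma> = 0) \<and> (\<exists>N. \<forall>n\<ge>N. \<forall>v. length v = n \<longrightarrow>
     wprob P1 (cls v) > exp (-(E1 - \<delta>2) * real n) \<longrightarrow>
     wprob P2 (cls v) > exp (-(E2 - \<delta>2) * real n) \<longrightarrow>
     wprob P1 (cls v) \<le> exp (-(\<gamma> + \<epsilon>) * real n) \<and> wprob P2 (cls v) \<le> exp (-(\<gamma> + \<epsilon>) * real n))"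
  proof (cases "\<gamma> = 0")
    case True
    show ?thesis
    proof (intro exI[of _ 0] conjI exI[of _ 0] allI impI)
      fix n and v :: "'a list" assume "length v = n"
      then have "cls v \<subseteq> {w. length w = n}" using cls_len by blast
      then show "wprob P1 (cls v) \<le> exp (-(\<gamma> + 0) * real n)" "wprob P2 (cls v) \<le> exp (-(\<gamma> + 0) * real n)"
        using wprob_le1 True by auto
    qed (use True in auto)
  next
    case False
    then have gp: "\<gamma> > 0" using g by simp
    obtain \<epsilon>1 Na where e1: "\<epsilon>1 > 0" and Na: "\<forall>n\<ge>Na. \<forall>v. length v = n \<longrightarrow>
     wprob P1 (cls v) > exp (-(E1 - \<delta>2) * real n) \<longrightarrow>
     wprob P2 (cls v) > exp (-(E2 - \<delta>2) * real n) \<longrightarrow>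
     wprob P1 (cls v) \<le> exp (-(\<gamma> + \<epsilon>1) * real n)"
      using key[OF rej gp d2 m2(2) m2(1)] by blast
    obtain \<epsilon>2 Nb where e2: "\<epsilon>2 > 0" and Nb: "\<forall>n\<ge>Nb. \<forall>v. length v = n \<longrightarrow>
     wprob P2 (cls v) > exp (-(E2 - \<delta>2) * real n) \<longrightarrow>
     wprob P1 (cls v) > exp (-(E1 - \<delta>2) * real n) \<longrightarrow>
     wprob P2 (cls v) \<le> exp (-(\<gamma> + \<epsilon>2) * real n)"
      using key[OF rej_swap[OF rej] gp d2 m1(2) m1(1)] by blast
    define \<epsilon> where "\<epsilon> = min \<epsilon>1 \<epsilon>2"
    have mono: "exp (-(\<gamma> + \<epsilon>') * real n) \<le> exp (-(\<gamma> + \<epsilon>) * real n)" if "\<epsilon>' \<ge> \<epsilon>" for \<epsilon>' n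
      using that by (simp add: mult_right_mono)
    show ?thesis
    proof (intro exI[of _ \<epsilon>] conjI exI[of _ "max Na Nb"] allI impI)
      fix n and v :: "'a list" assume h: "max Na Nb \<le> n" "length v = n"
        "wprob P1 (cls v) > exp (-(E1 - \<delta>2) * real n)" "wprob P2 (cls v) > exp (-(E2 - \<delta>2) * real n)"
      have a: "wprob P1 (cls v) \<le> exp (-(\<gamma> + \<epsilon>1) * real n)" using Na h by simp
      have b: "wprob P2 (cls v) \<le> exp (-(\<gamma> + \<epsilon>2) * real n)" using Nb h by simp
      show "wprob P1 (cls v) \<le> exp (-(\<gamma> + \<epsilon>) * real n)"
        using a mono[of \<epsilon>1 n] unfolding \<epsilon>_def by (meson min.cobounded1 order_trans)
      show "wprob P2 (cls v) \<le> exp (-(\<gamma> + \<epsilon>) * real n)"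
        using b mono[of \<epsilon>2 n] unfolding \<epsilon>_def by (meson min.cobounded2 order_trans)
    qed (use e1 e2 in \<open>auto simp: \<epsilon>_def\<close>)
  qed
  then obtain \<epsilon> N where e: "\<epsilon> \<ge> 0" "\<epsilon> = 0 \<longrightarrow> \<gamma> = 0" and N: "\<forall>n\<ge>N. \<forall>v. length v = n \<longrightarrow>
     wprob P1 (cls v) > exp (-(E1 - \<delta>2) * real n) \<longrightarrow>
     wprob P2 (cls v) > exp (-(E2 - \<delta>2) * real n) \<longrightarrow>
     wprob P1 (cls v) \<le> exp (-(\<gamma> + \<epsilon>) * real n) \<and> wprob P2 (cls v) \<le> exp (-(\<gamma> + \<epsilon>) * real n)"
    by blast
  obtain Nd where Nd: "\<forall>n\<ge>Nd. real ((n + 1) ^ CARD('a)) \<le> exp (\<delta>2 * real n)"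
    using poly_exp_le[OF d2] by blast
  obtain Ne where Ne: "\<epsilon> > 0 \<longrightarrow> (\<forall>n\<ge>Ne. real ((n + 1) ^ CARD('a)) \<le> exp (\<epsilon> * real n))"
    using poly_exp_le[of \<epsilon>] by blast
  show ?thesis
  proof (intro exI[of _ "max N (max Nd Ne)"] allI impI)
    fix n assume n: "max N (max Nd Ne) \<le> n"
    define A2 where "A2 = {v::'a list. length v = n \<and> wprob P1 (cls v) \<le> exp (-(E1 - \<delta>2) * real n)}"
    define A1 where "A1 = {v::'a list. length v = n \<and> \<not> wprob P1 (cls v) \<le> exp (-(E1 - \<delta>2) * real n)
                           \<and> wprob P2 (cls v) \<le> exp (-(E2 - \<delta>2) * real n)}"
    define AO where "AO = {v::'a list. length v = n \<and> \<not> wprob P1 (cls v) \<le> exp (-(E1 - \<delta>2) * real n)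
                           \<and> \<not> wprob P2 (cls v) \<le> exp (-(E2 - \<delta>2) * real n)}"
    have part: "partition3 n A1 A2 AO" unfolding partition3_def A1_def A2_def AO_def by auto
    have dd: "E1 - \<delta>2 - \<delta>2 = E1 - \<delta>" "E2 - \<delta>2 - \<delta>2 = E2 - \<delta>" unfolding \<delta>2_def by simp_all
    have b2: "wprob P1 A2 \<le> exp (- (E1 - \<delta>) * real n)"
    proof -
      have "wprob P1 A2 \<le> real ((n + 1) ^ CARD('a)) * exp (-(E1 - \<delta>2) * real n)"
        by (rule class_sum_bound) (auto simp: A2_def)
      then show ?thesis using poly_mult_exp[of n _ \<delta>2] Nd n dd by fastforce
    qed
    have b1: "wprob P2 A1 \<le> exp (- (E2 - \<delta>) * real n)"
    proof -
      have "wprob P2 A1 \<le> real ((n + 1) ^ CARD('a)) * exp (-(E2 - \<delta>2) * real n)"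
        by (rule class_sum_bound) (auto simp: A1_def)
      then show ?thesis using poly_mult_exp[of n _ \<delta>2] Nd n dd by fastforce
    qed
    have bO: "wprob P AO \<le> exp (- \<gamma> * real n)"
      if P: "P = P1 \<or> P = P2" for P
    proof (cases "\<epsilon> > 0")
      case True
      have "wprob P AO \<le> real ((n + 1) ^ CARD('a)) * exp (-(\<gamma> + \<epsilon>) * real n)"
        by (rule class_sum_bound) (use N n P in \<open>auto simp: AO_def\<close>)
      then have "wprob P AO \<le> exp (- (\<gamma> + \<epsilon> - \<epsilon>) * real n)"
        using poly_mult_exp[of n _ \<epsilon>] Ne True n by fastforce
      then show ?thesis by simp
    next
      case False
      then have "\<gamma> = 0" using e by simp
      have "AO \<subseteq> {w. length w = n}" by (auto simp: AO_def)
      from wprob_le1[OF this, of P] \<open>\<gamma> = 0\<close> show ?thesis by simp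
    qed
    show "\<exists>A1 A2 AO. partition3 n A1 A2 AO \<and>
     wprob P1 A2 \<le> exp (- (E1 - \<delta>) * real n) \<and>
     wprob P2 A1 \<le> exp (- (E2 - \<delta>) * real n) \<and>
     wprob P1 AO \<le> exp (- \<gamma> * real n) \<and> wprob P2 AO \<le> exp (- \<gamma> * real n)"
      using part b1 b2 bO by blast
  qed
qed

definition wp :: "'a pmf \<Rightarrow> 'a list \<Rightarrow> real" where
  "wp P v = (\<Prod>x\<leftarrow>v. pmf P x)"

lemma wp_nonneg: "wp P v \<ge> 0" unfolding wp_def by (rule prod_list_nonneg) auto

lemma sqrt_prod_list:
  "(\<Prod>x\<leftarrow>v. sqrt (pmf P x * pmf Q x)) = sqrt (wp P v * wp Q v)"
  unfolding wp_def by (induction v) (simp_all add: real_sqrt_mult algebra_simps)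

lemma sqrt_strict:
  fixes a b :: real
  assumes "a \<ge> 0" "b \<ge> 0" "a \<noteq> b"
  shows "sqrt (a * b) < (a + b) / 2"
proof (rule real_less_lsqrt)
  show "0 \<le> (a + b) / 2" using assms by simp
  have e: "(a + b)\<^sup>2 = (a - b)\<^sup>2 + 4 * (a * b)" by (simp add: power2_eq_square algebra_simps)
  have p: "(a - b)\<^sup>2 > 0" using assms(3) by simp
  have q: "((a + b) / 2)\<^sup>2 = (a + b)\<^sup>2 / 4" by (simp add: power_divide)
  show "a * b < ((a + b) / 2)\<^sup>2" using e p q by linarith
qed

lemma wprob_union: "finite A \<Longrightarrow> finite B \<Longrightarrow> wprob P (A \<union> B) \<le> wprob P A + wprob P B"
  unfolding wprob_def
  by (subst sum.union_inter[symmetric]) (auto intro!: sum_nonneg prod_list_nonneg)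

lemma lr_bound:
  fixes P1 P2 :: "'a::finite pmf"
  assumes "P1 \<noteq> P2"
  shows "\<exists>\<rho>. \<rho> \<ge> 0 \<and> \<rho> < 1 \<and> (\<forall>m. wprob P1 {v. length v = m \<and> wp P1 v \<le> wp P2 v} \<le> \<rho> ^ m
     \<and> wprob P2 {v. length v = m \<and> \<not> wp P1 v \<le> wp P2 v} \<le> \<rho> ^ m)"
proof -
  define \<rho> where "\<rho> = (\<Sum>x\<in>UNIV. sqrt (pmf P1 x * pmf P2 x))"
  have r0: "\<rho> \<ge> 0" unfolding \<rho>_def by (auto intro: sum_nonneg)
  have "\<exists>x. pmf P1 x \<noteq> pmf P2 x"
  proof (rule ccontr)
    assume "\<not> (\<exists>x. pmf P1 x \<noteq> pmf P2 x)"
    then have "P1 = P2" by (intro pmf_eqI) simp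
    then show False using assms by simp
  qed
  then obtain x0 where x0: "pmf P1 x0 \<noteq> pmf P2 x0" by blast
  have "\<rho> < (\<Sum>x\<in>UNIV. (pmf P1 x + pmf P2 x) / 2)"
    unfolding \<rho>_def
  proof (rule sum_strict_mono_ex1)
    show "\<forall>x\<in>UNIV. sqrt (pmf P1 x * pmf P2 x) \<le> (pmf P1 x + pmf P2 x) / 2"
      by (intro ballI arith_geo_mean_sqrt pmf_nonneg)
    show "\<exists>a\<in>UNIV. sqrt (pmf P1 a * pmf P2 a) < (pmf P1 a + pmf P2 a) / 2"
      using sqrt_strict[OF pmf_nonneg pmf_nonneg x0] by blast
  qed simp
  also have "\<dots> = 1"
    by (simp add: sum_divide_distrib[symmetric] sum.distrib sum_pmf_eq_1)
  finally have r1: "\<rho> < 1" .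
  have total: "(\<Sum>v\<in>{v::'a list. length v = m}. sqrt (wp P1 v * wp P2 v)) = \<rho> ^ m" for m
    unfolding \<rho>_def sum_prod_len[symmetric] sqrt_prod_list ..
  have fl: "finite {v::'a list. length v = m}" for m by (rule finite_len)
  have b1: "wprob P1 {v. length v = m \<and> wp P1 v \<le> wp P2 v} \<le> \<rho> ^ m" for m
  proof -
    have "wprob P1 {v. length v = m \<and> wp P1 v \<le> wp P2 v}
        = (\<Sum>v\<in>{v. length v = m \<and> wp P1 v \<le> wp P2 v}. wp P1 v)" unfolding wprob_def wp_def ..
    also have "\<dots> \<le> (\<Sum>v\<in>{v. length v = m \<and> wp P1 v \<le> wp P2 v}. sqrt (wp P1 v * wp P2 v))"
    proof (rule sum_mono)
      fix v assume "v \<in> {v. length v = m \<and> wp P1 v \<le> wp P2 v}"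
      then have "wp P1 v * wp P1 v \<le> wp P1 v * wp P2 v" using wp_nonneg by (auto intro: mult_left_mono)
      then have "sqrt (wp P1 v * wp P1 v) \<le> sqrt (wp P1 v * wp P2 v)" by (rule real_sqrt_le_mono)
      then show "wp P1 v \<le> sqrt (wp P1 v * wp P2 v)" using wp_nonneg[of P1 v] by (simp add: real_sqrt_mult_self)
    qed
    also have "\<dots> \<le> (\<Sum>v\<in>{v::'a list. length v = m}. sqrt (wp P1 v * wp P2 v))"
      by (rule sum_mono2[OF fl]) (auto intro: wp_nonneg mult_nonneg_nonneg)
    finally show ?thesis using total by simp
  qed
  have b2: "wprob P2 {v. length v = m \<and> \<not> wp P1 v \<le> wp P2 v} \<le> \<rho> ^ m" for m
  proof -
    have "wprob P2 {v. length v = m \<and> \<not> wp P1 v \<le> wp P2 v}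
        = (\<Sum>v\<in>{v. length v = m \<and> \<not> wp P1 v \<le> wp P2 v}. wp P2 v)" unfolding wprob_def wp_def ..
    also have "\<dots> \<le> (\<Sum>v\<in>{v. length v = m \<and> \<not> wp P1 v \<le> wp P2 v}. sqrt (wp P1 v * wp P2 v))"
    proof (rule sum_mono)
      fix v assume "v \<in> {v. length v = m \<and> \<not> wp P1 v \<le> wp P2 v}"
      then have "wp P2 v * wp P2 v \<le> wp P1 v * wp P2 v" using wp_nonneg[of P2 v] by (intro mult_right_mono) auto
      then have "sqrt (wp P2 v * wp P2 v) \<le> sqrt (wp P1 v * wp P2 v)" by (rule real_sqrt_le_mono)
      then show "wp P2 v \<le> sqrt (wp P1 v * wp P2 v)" using wp_nonneg[of P2 v] by (simp add: real_sqrt_mult_self)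
    qed
    also have "\<dots> \<le> (\<Sum>v\<in>{v::'a list. length v = m}. sqrt (wp P1 v * wp P2 v))"
      by (rule sum_mono2[OF fl]) (auto intro: wp_nonneg mult_nonneg_nonneg)
    finally show ?thesis using total by simp
  qed
  show ?thesis using r0 r1 b1 b2 by blast
qed

lemma rej_sub_seq:
  fixes P1 P2 :: "'a::finite pmf"
  assumes rej: "(E1, E2) \<in> R_rej P1 P2 \<gamma>" and g: "\<gamma> \<ge> 0"
    and s1: "set_pmf P1 = UNIV" and s2: "set_pmf P2 = UNIV" and ne: "P1 \<noteq> P2"
  shows "(E1, E2) \<in> R_seq P1 P2 \<gamma>"
  unfolding R_seq_def
proof clarify
  fix \<delta> :: real assume d: "\<delta> > 0"
  obtain \<rho> where r: "\<rho> \<ge> 0" "\<rho> < 1" and LR: "\<And>m. wprob P1 {v. length v = m \<and> wp P1 v \<le> wp P2 v} \<le> \<rho> ^ m"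
     "\<And>m. wprob P2 {v. length v = m \<and> \<not> wp P1 v \<le> wp P2 v} \<le> \<rho> ^ m"
    using lr_bound[OF ne] by blast
  define Em where "Em = max (max E1 E2) 0"
  obtain K0 where K0: "\<rho> ^ K0 < exp (- Em)" using real_arch_pow_inv[OF exp_gt_zero r(2)] by blast
  define K where "K = K0 + 1"
  have K1: "K \<ge> 1" unfolding K_def by simp
  have rK: "\<rho> ^ K \<le> exp (- Em)"
    using K0 power_decreasing[of K0 K \<rho>] r unfolding K_def by simp
  have rKn: "\<rho> ^ (K * n) \<le> exp (- E * real n)" if "E \<le> Em" for E n
  proof -
    have "\<rho> ^ (K * n) = (\<rho> ^ K) ^ n" by (simp add: power_mult)
    also have "\<dots> \<le> exp (- Em) ^ n" using rK r by (intro power_mono) auto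
    also have "\<dots> = exp (- Em * real n)" by (simp add: exp_of_nat_mult[symmetric] mult.commute)
    also have "\<dots> \<le> exp (- E * real n)" using that by (simp add: mult_right_mono)
    finally show ?thesis .
  qed
  have d2: "\<delta> / 2 > 0" using d by simp
  obtain n0 where H: "\<forall>n\<ge>n0. \<exists>A1 A2 AO. partition3 n A1 A2 AO \<and>
     wprob P1 A2 \<le> exp (- (E1 - \<delta> / 2) * real n) \<and>
     wprob P2 A1 \<le> exp (- (E2 - \<delta> / 2) * real n) \<and>
     wprob P1 AO \<le> exp (- \<gamma> * real n) \<and> wprob P2 AO \<le> exp (- \<gamma> * real n)"
    using rej_strong[OF rej g s1 s2 d2] by blast
  show "\<exists>l::nat. l \<ge> 1 \<and> (\<exists>C::real. C > 0 \<and> (\<exists>n0. \<forall>n\<ge>n0.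
      \<exists>N stp dec. real N \<le> C * real n ^ l \<and> seq_test N stp dec \<and>
        wprob P1 {w. length w = N \<and> stime stp w > n} \<le> exp (- \<gamma> * real n) \<and>
        wprob P2 {w. length w = N \<and> stime stp w > n} \<le> exp (- \<gamma> * real n) \<and>
        wprob P1 {w. length w = N \<and> sdec stp dec w = 2} \<le> exp (- (E1 - \<delta>) * real n) \<and>
        wprob P2 {w. length w = N \<and> sdec stp dec w = 1} \<le> exp (- (E2 - \<delta>) * real n)))"
  proof (rule exI[of _ 1], rule conjI[OF order_refl], rule exI[of _ "real K + 1"], rule conjI, simp,
      rule exI[of _ "max n0 (max 1 (nat \<lceil>ln 2 / (\<delta> / 2)\<rceil>))"], intro allI impI)
    fix n assume n: "max n0 (max 1 (nat \<lceil>ln 2 / (\<delta> / 2)\<rceil>)) \<le> n"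
    then obtain A1 A2 AO where A: "partition3 n A1 A2 AO"
      "wprob P1 A2 \<le> exp (- (E1 - \<delta> / 2) * real n)"
      "wprob P2 A1 \<le> exp (- (E2 - \<delta> / 2) * real n)"
      "wprob P1 AO \<le> exp (- \<gamma> * real n)" "wprob P2 AO \<le> exp (- \<gamma> * real n)"
      using H by force
    have n1: "n \<ge> 1" using n by simp
    have two: "2 \<le> exp (\<delta> / 2 * real n)"
      using two_le_exp[OF d2, of n] n by linarith
    define N where "N = n + K * n"
    have Nn: "N > n" unfolding N_def using K1 n1 by simp
    define stp where "stp v \<longleftrightarrow> (length v = n \<and> v \<notin> AO) \<or> length v = N" for v :: "'a list"
    define dec where "dec v = (if length v = n then (if v \<in> A2 then 2 else 1)
        else (if wp P1 (drop n v) \<le> wp P2 (drop n v) then 2 else (1::nat)))" for v :: "'a list"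
    have Asub: "A1 \<subseteq> {v. length v = n}" "A2 \<subseteq> {v. length v = n}" "AO \<subseteq> {v. length v = n}"
      using A(1) unfolding partition3_def by blast+
    have st_not: "stime stp w = n" if "length w = N" "take n w \<notin> AO" for w
      unfolding stime_def
    proof (rule Least_equality)
      show "stp (take n w)" unfolding stp_def using that Nn by simp
      fix y assume "stp (take y w)"
      then show "n \<le> y" unfolding stp_def using that Nn by (auto simp: min_def split: if_splits)
    qed
    have st_in: "stime stp w = N" if "length w = N" "take n w \<in> AO" for w
      unfolding stime_def
    proof (rule Least_equality)
      show "stp (take N w)" unfolding stp_def using that by simp
      fix y assume y: "stp (take y w)"
      show "N \<le> y"
      proof (rule ccontr)
        assume "\<not> N \<le> y"
        then have yN: "y < N" by simp
        then have "length (take y w) = y" using that by simp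
        then have "y = n \<and> take y w \<notin> AO" using y yN unfolding stp_def by auto
        then show False using that by auto
      qed
    qed
    have sd_not: "sdec stp dec w = (if take n w \<in> A2 then 2 else 1)" if "length w = N" "take n w \<notin> AO" for w
      unfolding sdec_def st_not[OF that] dec_def using that Nn by simp
    have sd_in: "sdec stp dec w = (if wp P1 (drop n w) \<le> wp P2 (drop n w) then 2 else 1)"
      if "length w = N" "take n w \<in> AO" for w
      unfolding sdec_def st_in[OF that] dec_def using that Nn by simp
    have fl: "finite {w::'a list. length w = N}" by (rule finite_len)
    have setO: "{w. length w = N \<and> stime stp w > n} = {w. length w = n + K * n \<and> take n w \<in> AO \<and> True}"
      using st_not st_in Nn unfolding N_def by fastforce
    have wO: "wprob P {w. length w = N \<and> stime stp w > n} = wprob P AO" for P :: "'a pmf"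
    proof -
      have "wprob P {w. length w = N \<and> stime stp w > n} = wprob P {v. length v = n \<and> v \<in> AO} * wprob P {v. length v = K * n \<and> True}"
        unfolding setO by (rule wprob_split)
      also have "{v. length v = n \<and> v \<in> AO} = AO" using Asub by blast
      finally show ?thesis by (simp add: wprob_len)
    qed
    have split1: "wprob P {w. length w = n + K * n \<and> take n w \<in> X \<and> True} = wprob P X"
      if "X \<subseteq> {v. length v = n}" for P :: "'a pmf" and X
    proof -
      have "wprob P {w. length w = n + K * n \<and> take n w \<in> X \<and> True} = wprob P {v. length v = n \<and> v \<in> X} * wprob P {v. length v = K * n \<and> True}"
        by (rule wprob_split)
      also have "{v. length v = n \<and> v \<in> X} = X" using that by blast
      finally show ?thesis by (simp add: wprob_len)
    qed
    have split2: "wprob P {w. length w = n + K * n \<and> take n w \<in> AO \<and> B (drop n w)} \<le> wprob P {v. length v = K * n \<and> B v}"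
      for P :: "'a pmf" and B
    proof -
      have "wprob P {w. length w = n + K * n \<and> take n w \<in> AO \<and> B (drop n w)} = wprob P {v. length v = n \<and> v \<in> AO} * wprob P {v. length v = K * n \<and> B v}"
        by (rule wprob_split)
      also have "\<dots> \<le> 1 * wprob P {v. length v = K * n \<and> B v}"
        by (intro mult_right_mono wprob_le1[of _ n] wprob_nonneg) auto
      finally show ?thesis by simp
    qed
    have fin: "finite {w. length w = n + K * n \<and> Q w}" for Q :: "'a list \<Rightarrow> bool"
      by (rule finite_subset[of _ "{w::'a list. length w = n + K * n}"]) (auto intro: finite_len)
    have err: "wprob P {w. length w = N \<and> sdec stp dec w = j} \<le> exp (- (E - \<delta>) * real n)"
      if X: "X \<subseteq> {v. length v = n}" and E: "E \<le> Em" and b1: "wprob P X \<le> exp (- (E - \<delta> / 2) * real n)"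
        and b2: "\<And>m. wprob P {v. length v = m \<and> B v} \<le> \<rho> ^ m"
        and inc: "\<And>w. length w = N \<Longrightarrow> sdec stp dec w = j \<Longrightarrow> take n w \<in> X \<or> (take n w \<in> AO \<and> B (drop n w))"
      for P :: "'a pmf" and j X E B
    proof -
      have "wprob P {w. length w = N \<and> sdec stp dec w = j}
          \<le> wprob P ({w. length w = n + K * n \<and> take n w \<in> X \<and> True} \<union> {w. length w = n + K * n \<and> take n w \<in> AO \<and> B (drop n w)})"
        by (rule wprob_mono) (use inc fin in \<open>auto simp: N_def\<close>)
      also have "\<dots> \<le> wprob P {w. length w = n + K * n \<and> take n w \<in> X \<and> True} + wprob P {w. length w = n + K * n \<and> take n w \<in> AO \<and> B (drop n w)}"
        by (rule wprob_union[OF fin fin])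
      also have "\<dots> \<le> exp (- (E - \<delta> / 2) * real n) + exp (- E * real n)"
        using split1[OF X, of P] b1 split2[of P B] b2[of "K * n"] rKn[OF E, of n] by linarith
      also have "\<dots> \<le> 2 * exp (- (E - \<delta> / 2) * real n)"
      proof -
        have "- E * real n \<le> - (E - \<delta> / 2) * real n" using d by (intro mult_right_mono) auto
        then have "exp (- E * real n) \<le> exp (- (E - \<delta> / 2) * real n)" by simp
        then show ?thesis by linarith
      qed
      also have "\<dots> \<le> exp (\<delta> / 2 * real n) * exp (- (E - \<delta> / 2) * real n)"
        using two by (intro mult_right_mono) auto
      also have "\<dots> = exp (- (E - \<delta>) * real n)" by (simp add: mult_exp_exp algebra_simps)
      finally show ?thesis .
    qed
    have e1: "wprob P1 {w. length w = N \<and> sdec stp dec w = 2} \<le> exp (- (E1 - \<delta>) * real n)"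
    proof (rule err[OF Asub(2) _ A(2) LR(1)])
      show "E1 \<le> Em" unfolding Em_def by simp
      fix w assume w: "length w = N" "sdec stp dec w = 2"
      show "take n w \<in> A2 \<or> take n w \<in> AO \<and> wp P1 (drop n w) \<le> wp P2 (drop n w)"
      proof (cases "take n w \<in> AO")
        case True then show ?thesis using sd_in[OF w(1) True] w(2) by (simp split: if_splits)
      next
        case False then show ?thesis using sd_not[OF w(1) False] w(2) by (simp split: if_splits)
      qed
    qed
    have e2: "wprob P2 {w. length w = N \<and> sdec stp dec w = 1} \<le> exp (- (E2 - \<delta>) * real n)"
    proof (rule err[OF Asub(1) _ A(3) LR(2)])
      show "E2 \<le> Em" unfolding Em_def by simp
      fix w assume w: "length w = N" "sdec stp dec w = 1"
      show "take n w \<in> A1 \<or> take n w \<in> AO \<and> \<not> wp P1 (drop n w) \<le> wp P2 (drop n w)"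
      proof (cases "take n w \<in> AO")
        case True
        have "\<not> wp P1 (drop n w) \<le> wp P2 (drop n w)"
        proof
          assume h: "wp P1 (drop n w) \<le> wp P2 (drop n w)"
          have "sdec stp dec w = 2" using sd_in[OF w(1) True] h by simp
          then show False using w(2) by simp
        qed
        then show ?thesis using True by blast
      next
        case False
        have l: "length (take n w) = n" using w(1) Nn by simp
        have U: "A1 \<union> A2 \<union> AO = {w. length w = n}" using A(1) unfolding partition3_def by simp
        have "take n w \<in> A1 \<union> A2 \<union> AO" using l U by simp
        moreover have "take n w \<notin> A2"
          using sd_not[OF w(1) False] w(2) by (cases "take n w \<in> A2") simp_all
        ultimately show ?thesis using False by simp
      qed
    qed
    have seq: "seq_test N stp dec"
      unfolding seq_test_def
    proof (intro conjI allI impI)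
      fix w :: "'a list" assume "length w = N"
      then show "\<exists>k\<le>N. stp (take k w)" by (intro exI[of _ N]) (simp add: stp_def)
    next
      fix w show "dec w \<in> {1, 2}" unfolding dec_def by simp
    qed
    have NC: "real N \<le> (real K + 1) * real n ^ 1" unfolding N_def by (simp add: algebra_simps)
    show "\<exists>N stp dec. real N \<le> (real K + 1) * real n ^ 1 \<and> seq_test N stp dec \<and>
        wprob P1 {w. length w = N \<and> stime stp w > n} \<le> exp (- \<gamma> * real n) \<and>
        wprob P2 {w. length w = N \<and> stime stp w > n} \<le> exp (- \<gamma> * real n) \<and>
        wprob P1 {w. length w = N \<and> sdec stp dec w = 2} \<le> exp (- (E1 - \<delta>) * real n) \<and>
        wprob P2 {w. length w = N \<and> sdec stp dec w = 1} \<le> exp (- (E2 - \<delta>) * real n)"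
    proof -
      have o1: "wprob P1 {w. length w = N \<and> stime stp w > n} \<le> exp (- \<gamma> * real n)"
        using wO[of P1] A(4) by simp
      have o2: "wprob P2 {w. length w = N \<and> stime stp w > n} \<le> exp (- \<gamma> * real n)"
        using wO[of P2] A(5) by simp
      show ?thesis using NC seq o1 o2 e1 e2 by blast
    qed
  qed
qed

theorem lemma1:
  fixes P1 P2 :: "'a::finite pmf" and \<gamma> :: real
  assumes "set_pmf P1 = UNIV" and "set_pmf P2 = UNIV" and "P1 \<noteq> P2"
    and "\<gamma> \<ge> 0"
  shows "R_rej P1 P2 \<gamma> = R_seq P1 P2 \<gamma>"
proof (rule set_eqI)
  fix p :: "real \<times> real"
  obtain E1 E2 where p: "p = (E1, E2)" by (cases p)
  show "p \<in> R_rej P1 P2 \<gamma> \<longleftrightarrow> p \<in> R_seq P1 P2 \<gamma>"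
    unfolding p using rej_sub_seq[OF _ assms(4,1,2,3)] seq_sub_rej by blast
qed

end
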